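(* Let $\alpha$ be any graph function on a strongly connected digraph $G$. For any fair infinite sequence of raising operations starting from $\alpha$, with raising vectors $r(1),r(2),\dots$, the limit $r^*=\lim_{t\to\infty}r(t)$ exists and depends only on $\alpha$, not on the sequence of raising operations.
   Context: $G$ is a strongly connected directed graph (self-loops allowed); a graph function assigns a real weight $\alpha_{uv}$ to each edge. For a graph function $\beta$, $\beta_v^{\text{in}}=\max_{u:(u,v)\in G}\beta_{uv}$, $\beta_v^{\text{out}}=\max_{w:(v,w)\in G}\beta_{vw}$, $\rho^R_v=\max\{0,\beta_v^{\text{out}}-\beta_v^{\text{in}}\}$. A raising operation at $v$: if $\rho^R_v>0$, add $\rho^R_v/2$ to each $\beta_{uv}$ ($u\ne v$) and subtract it from each $\beta_{vw}$ ($w\ne v$); otherwise do nothing. A sequence of operations is fair if every vertex occurs infinitely often. The raising vector $r(t)$ satisfies $r(0)=0$ and, if the $t$-th operation is at $v$, $r_v(t)=r_v(t-1)+\rho^R_v/2$ (computed before the operation), other coordinates unchanged. *)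

theory Defs
  imports Complex_Main
begin

text \<open>A graph function is a map beta :: 'v => 'v => real;
  only its values on edges E are meaningful.\<close>

definition strongly_connected :: "'v set \<Rightarrow> ('v \<times> 'v) set \<Rightarrow> bool" where
  "strongly_connected V E \<longleftrightarrow> E \<subseteq> V \<times> V \<and> (\<forall>u\<in>V. \<forall>w\<in>V. (u, w) \<in> E\<^sup>+)"

definition beta_in :: "('v \<times> 'v) set \<Rightarrow> ('v \<Rightarrow> 'v \<Rightarrow> real) \<Rightarrow> 'v \<Rightarrow> real" where
  "beta_in E \<beta> v = Max {\<beta> u v | u. (u, v) \<in> E}"

definition beta_out :: "('v \<times> 'v) set \<Rightarrow> ('v \<Rightarrow> 'v \<Rightarrow> real) \<Rightarrow> 'v \<Rightarrow> real" where
  "beta_out E \<beta> v = Max {\<beta> v w | w. (v, w) \<in> E}"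

definition rhoR :: "('v \<times> 'v) set \<Rightarrow> ('v \<Rightarrow> 'v \<Rightarrow> real) \<Rightarrow> 'v \<Rightarrow> real" where
  "rhoR E \<beta> v = max 0 (beta_out E \<beta> v - beta_in E \<beta> v)"

definition raise :: "('v \<times> 'v) set \<Rightarrow> ('v \<Rightarrow> 'v \<Rightarrow> real) \<Rightarrow> 'v \<Rightarrow> ('v \<Rightarrow> 'v \<Rightarrow> real)" where
  "raise E \<beta> v = (let \<rho> = rhoR E \<beta> v in
     if \<rho> > 0 then
       (\<lambda>u w. if (u, w) \<in> E \<and> w = v \<and> u \<noteq> v then \<beta> u w + \<rho> / 2
              else if (u, w) \<in> E \<and> u = v \<and> w \<noteq> v then \<beta> u w - \<rho> / 2
              else \<beta> u w)
     else \<beta>)"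

text \<open>State after t operations; sigma t is the (t+1)-th operation.\<close>
primrec beta_seq :: "('v \<times> 'v) set \<Rightarrow> ('v \<Rightarrow> 'v \<Rightarrow> real) \<Rightarrow> (nat \<Rightarrow> 'v) \<Rightarrow> nat \<Rightarrow> ('v \<Rightarrow> 'v \<Rightarrow> real)" where
  "beta_seq E \<alpha> \<sigma> 0 = \<alpha>"
| "beta_seq E \<alpha> \<sigma> (Suc t) = raise E (beta_seq E \<alpha> \<sigma> t) (\<sigma> t)"

primrec raising_vec :: "('v \<times> 'v) set \<Rightarrow> ('v \<Rightarrow> 'v \<Rightarrow> real) \<Rightarrow> (nat \<Rightarrow> 'v) \<Rightarrow> nat \<Rightarrow> 'v \<Rightarrow> real" where
  "raising_vec E \<alpha> \<sigma> 0 = (\<lambda>v. 0)"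
| "raising_vec E \<alpha> \<sigma> (Suc t) = (\<lambda>v. raising_vec E \<alpha> \<sigma> t v +
      (if v = \<sigma> t then rhoR E (beta_seq E \<alpha> \<sigma> t) v / 2 else 0))"

definition fair :: "'v set \<Rightarrow> (nat \<Rightarrow> 'v) \<Rightarrow> bool" where
  "fair V \<sigma> \<longleftrightarrow> (\<forall>t. \<sigma> t \<in> V) \<and> (\<forall>v\<in>V. infinite {t. \<sigma> t = v})"

end

theory Submission
  imports Defs
begin


fun wt :: "('v \<Rightarrow> 'v \<Rightarrow> real) \<Rightarrow> 'v list \<Rightarrow> real" where
  "wt f (x # y # zs) = f x y + wt f (y # zs)"
| "wt f _ = 0"

fun walk :: "('v \<times> 'v) set \<Rightarrow> 'v list \<Rightarrow> bool" where
  "walk E (x # y # zs) = ((x, y) \<in> E \<and> walk E (y # zs))"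
| "walk E _ = True"

lemma wt_append: "wt f (xs @ y # ys) = wt f (xs @ [y]) + wt f (y # ys)"
  by (induction xs rule: induct_list012) auto

lemma walk_append: "walk E (xs @ y # ys) \<longleftrightarrow> walk E (xs @ [y]) \<and> walk E (y # ys)"
  by (induction xs rule: induct_list012) auto

lemma wt_snoc: "xs \<noteq> [] \<Longrightarrow> wt f (xs @ [z]) = wt f xs + f (last xs) z"
proof -
  assume "xs \<noteq> []"
  then obtain ys y where xs: "xs = ys @ [y]" by (metis rev_exhaust)
  have "wt f (ys @ [y, z]) = wt f (ys @ [y]) + wt f [y, z]" using wt_append[of f ys y "[z]"] by simp
  then show ?thesis using xs by simp
qed

lemma walk_snoc: "xs \<noteq> [] \<Longrightarrow> walk E (xs @ [z]) \<longleftrightarrow> walk E xs \<and> (last xs, z) \<in> E"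
proof -
  assume "xs \<noteq> []"
  then obtain ys y where xs: "xs = ys @ [y]" by (metis rev_exhaust)
  have "walk E (ys @ [y, z]) \<longleftrightarrow> walk E (ys @ [y]) \<and> walk E [y, z]" using walk_append[of E ys y "[z]"] by simp
  then show ?thesis using xs by simp
qed

lemma wt_shift: "xs \<noteq> [] \<Longrightarrow> wt (\<lambda>u w. f u w - l) xs = wt f xs - l * (real (length xs) - 1)"
  by (induction xs rule: induct_list012) (auto simp: algebra_simps)

lemma walk_concat:
  assumes "walk E p" "walk E q" "p \<noteq> []" "q \<noteq> []" "last p = hd q"
  shows "walk E (p @ tl q) \<and> wt f (p @ tl q) = wt f p + wt f q"
proof -
  obtain v q' where q: "q = v # q'" using assms by (cases q) auto
  define p0 where "p0 = butlast p"
  have p: "p = p0 @ [v]" using assms q unfolding p0_def by (metis append_butlast_last_id list.sel(1))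
  have w1: "walk E (p0 @ [v])" using assms(1) p by simp
  have w2: "walk E (v # q')" using assms(2) q by simp
  have "walk E (p0 @ v # q')" using walk_append[of E p0 v q'] w1 w2 by blast
  moreover have "wt f (p0 @ v # q') = wt f (p0@[v]) + wt f (v#q')" by (rule wt_append)
  moreover have "p @ tl q = p0 @ v # q'" using p q by simp
  ultimately show ?thesis using p q by simp
qed

lemma walk_set: "walk E xs \<Longrightarrow> 2 \<le> length xs \<Longrightarrow> E \<subseteq> V \<times> V \<Longrightarrow> set xs \<subseteq> V"
proof (induction xs rule: induct_list012)
  case (3 x y zs)
  then show ?case by (cases zs) auto
qed auto

lemma trancl_walk: "(u, w) \<in> E\<^sup>+ \<Longrightarrow> \<exists>xs. walk E xs \<and> 2 \<le> length xs \<and> hd xs = u \<and> last xs = w"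
proof (induction rule: trancl_induct)
  case (base y)
  then show ?case by (intro exI[of _ "[u, y]"]) auto
next
  case (step y z)
  then obtain xs where "walk E xs" "2 \<le> length xs" "hd xs = u" "last xs = y" by blast
  then show ?case using step walk_snoc[of xs E z]
    by (intro exI[of _ "xs @ [z]"]) (auto simp: hd_append)
qed



lemma aux_ineq: "(P - Q - 2 * e) / 2 \<le> (X::real) \<Longrightarrow> e = dd / 4 \<Longrightarrow> dd = P - Q - 2 * l \<Longrightarrow> 0 < dd \<Longrightarrow> l < X"
  by (simp add: field_simps)

locale scg =
  fixes V :: "'v set" and E :: "('v \<times> 'v) set" and \<alpha> :: "'v \<Rightarrow> 'v \<Rightarrow> real"
  assumes finV: "finite V" and sc: "strongly_connected V E"
begin

lemma EV: "E \<subseteq> V \<times> V" using sc unfolding strongly_connected_def by blast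

lemma reach: "u \<in> V \<Longrightarrow> w \<in> V \<Longrightarrow> (u, w) \<in> E\<^sup>+"
  using sc unfolding strongly_connected_def by blast

lemma finE: "finite E" using EV finV by (meson finite_SigmaI finite_subset)

lemma fin_out: "finite {w. (v, w) \<in> E}"
proof -
  have "{w. (v, w) \<in> E} \<subseteq> snd ` E" by force
  then show ?thesis using finE finite_subset by blast
qed

lemma fin_in: "finite {u. (u, v) \<in> E}"
proof -
  have "{u. (u, v) \<in> E} \<subseteq> fst ` E" by force
  then show ?thesis using finE finite_subset by blast
qed

lemma has_out: "v \<in> V \<Longrightarrow> {w. (v, w) \<in> E} \<noteq> {}"
  using reach[of v v] by (auto elim: converse_tranclE)

lemma has_in: "v \<in> V \<Longrightarrow> {u. (u, v) \<in> E} \<noteq> {}"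
  using reach[of v v] by (auto elim: tranclE)

definition closed :: "'v list \<Rightarrow> bool" where
  "closed xs \<longleftrightarrow> walk E xs \<and> 2 \<le> length xs \<and> hd xs = last xs"

lemma closed_ne: "closed xs \<Longrightarrow> xs \<noteq> []"
  unfolding closed_def by auto

definition "Short = {xs. closed xs \<and> length xs \<le> card V + 1}"

definition ratio :: "'v list \<Rightarrow> real" where
  "ratio xs = wt \<alpha> xs / (real (length xs) - 1)"

lemma closed_set: "closed xs \<Longrightarrow> set xs \<subseteq> V"
  using walk_set[OF _ _ EV] unfolding closed_def by blast

lemma finite_Short: "finite Short"
proof -
  have "Short \<subseteq> {xs. set xs \<subseteq> V \<and> length xs \<le> card V + 1}"
    unfolding Short_def using closed_set by blast
  then show ?thesis using finite_lists_length_le[OF finV] finite_subset by blast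
qed

lemma decomp:
  assumes "closed xs" "length xs > card V + 1"
  shows "\<exists>c1 c2. closed c1 \<and> closed c2 \<and> length c1 < length xs \<and> length c2 < length xs
     \<and> wt f xs = wt f c1 + wt f c2
     \<and> real (length xs) - 1 = (real (length c1) - 1) + (real (length c2) - 1)"
proof -
  obtain h ws where xs: "xs = h # ws" using assms unfolding closed_def by (cases xs) auto
  have "set ws \<subseteq> V" using closed_set[OF assms(1)] xs by auto
  then have "card (set ws) \<le> card V" using finV by (simp add: card_mono)
  moreover have "length ws > card V" using assms xs by simp
  ultimately have "\<not> distinct ws" using distinct_card by fastforce
  then obtain a v b cc where ws: "ws = a @ [v] @ b @ [v] @ cc"
    using not_distinct_decomp by blast
  have xe: "xs = (h # a) @ v # (b @ v # cc)" using xs ws by simp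
  have wx: "walk E xs" using assms unfolding closed_def by simp
  have w: "walk E ((h # a) @ v # (b @ v # cc))" using wx by (simp only: xe)
  then have w1: "walk E ((h # a) @ [v])" and w2: "walk E (v # b @ v # cc)"
    using walk_append[of E "h # a" v "b @ v # cc"] by blast+
  from w2 have w3: "walk E ((v # b) @ [v])" and w4: "walk E (v # cc)"
    using walk_append[of E "v # b" v cc] by simp_all
  have wt1: "wt f xs = wt f ((h # a) @ [v]) + wt f (v # b @ v # cc)"
    using wt_append[of f "h # a" v "b @ v # cc"] xs ws by simp
  have wt2: "wt f (v # b @ v # cc) = wt f ((v # b) @ [v]) + wt f (v # cc)"
    using wt_append[of f "v # b" v cc] by simp
  have wt3: "wt f ((h # a) @ v # cc) = wt f ((h # a) @ [v]) + wt f (v # cc)"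
    using wt_append[of f "h # a" v cc] by simp
  have hl: "hd xs = last xs" using assms unfolding closed_def by simp
  have l1: "last ((h # a) @ v # cc) = last (v # cc)" by simp
  have l2: "last xs = last (v # cc)" using xe by simp
  have hd2: "hd ((h # a) @ v # cc) = hd xs" using xe by simp
  have wc2: "walk E ((h # a) @ v # cc)" using walk_append[of E "h # a" v cc] w1 w4 by blast
  have c2: "closed ((h # a) @ v # cc)"
    unfolding closed_def using wc2 l1 l2 hd2 hl by simp
  have c1: "closed ((v # b) @ [v])" unfolding closed_def using w3 by simp
  have len: "length xs = length a + length b + length cc + 3" using xe by simp
  have len1: "length ((v # b) @ [v]) = length b + 2" by simp
  have len2: "length ((h # a) @ v # cc) = length a + length cc + 2" by simp
  have wtx: "wt f xs = wt f ((v # b) @ [v]) + wt f ((h # a) @ v # cc)"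
    using wt1 wt2 wt3 by linarith
  have rl: "real (length xs) - 1 = (real (length ((v # b) @ [v])) - 1) + (real (length ((h # a) @ v # cc)) - 1)"
    unfolding len len1 len2 by simp
  have "length ((v # b) @ [v]) < length xs" "length ((h # a) @ v # cc) < length xs"
    unfolding len len1 len2 by simp_all
  then show ?thesis using c1 c2 wtx rl by blast
qed

lemma short_bound: "closed xs \<Longrightarrow> \<exists>ys\<in>Short. wt \<alpha> xs \<le> ratio ys * (real (length xs) - 1)"
proof (induction "length xs" arbitrary: xs rule: less_induct)
  case less
  show ?case
  proof (cases "length xs \<le> card V + 1")
    case True
    then have "xs \<in> Short" using less unfolding Short_def by simp
    moreover have "real (length xs) - 1 > 0" using less unfolding closed_def by simp
    ultimately show ?thesis unfolding ratio_def by (intro bexI[of _ xs]) auto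
  next
    case False
    then obtain c1 c2 where c: "closed c1" "closed c2" "length c1 < length xs" "length c2 < length xs"
      "wt \<alpha> xs = wt \<alpha> c1 + wt \<alpha> c2"
      "real (length xs) - 1 = (real (length c1) - 1) + (real (length c2) - 1)"
      using decomp[OF less(2)] by force
    obtain y1 where y1: "y1 \<in> Short" "wt \<alpha> c1 \<le> ratio y1 * (real (length c1) - 1)"
      using less(1)[OF c(3) c(1)] by blast
    obtain y2 where y2: "y2 \<in> Short" "wt \<alpha> c2 \<le> ratio y2 * (real (length c2) - 1)"
      using less(1)[OF c(4) c(2)] by blast
    have p1: "real (length c1) - 1 \<ge> 0" "real (length c2) - 1 \<ge> 0"
      using c(1,2) unfolding closed_def by auto
    show ?thesis
    proof (cases "ratio y1 \<le> ratio y2")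
      case True
      have "wt \<alpha> xs \<le> ratio y2 * (real (length c1) - 1) + ratio y2 * (real (length c2) - 1)"
        using c(5) y1 y2 mult_right_mono[OF True p1(1)] by linarith
      also have "ratio y2 * (real (length c1) - 1) + ratio y2 * (real (length c2) - 1) = ratio y2 * (real (length xs) - 1)"
        by (simp only: c(6) distrib_left)
      finally show ?thesis using y2 by blast
    next
      case False
      have "wt \<alpha> xs \<le> ratio y1 * (real (length c1) - 1) + ratio y1 * (real (length c2) - 1)"
        using c(5) y1 y2 mult_right_mono[of "ratio y2" "ratio y1", OF _ p1(2)] False by linarith
      also have "ratio y1 * (real (length c1) - 1) + ratio y1 * (real (length c2) - 1) = ratio y1 * (real (length xs) - 1)"
        by (simp only: c(6) distrib_left)
      finally show ?thesis using y1 by blast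
    qed
  qed
qed

definition "lam = Max (ratio ` Short)"


definition Pf :: "('v \<Rightarrow> real) \<Rightarrow> 'v \<Rightarrow> real" where
  "Pf r v = Max ((\<lambda>w. \<alpha> v w + r w) ` {w. (v, w) \<in> E})"

definition Qf :: "('v \<Rightarrow> real) \<Rightarrow> 'v \<Rightarrow> real" where
  "Qf r v = Max ((\<lambda>u. \<alpha> u v - r u) ` {u. (u, v) \<in> E})"

definition supersol :: "('v \<Rightarrow> real) \<Rightarrow> bool" where
  "supersol s \<longleftrightarrow> (\<forall>v\<in>V. Pf s v - Qf s v \<le> 2 * s v)"

definition Bf :: "('v \<Rightarrow> real) \<Rightarrow> 'v \<Rightarrow> 'v \<Rightarrow> real" where
  "Bf r = (\<lambda>u w. if (u, w) \<in> E then \<alpha> u w + r w - r u else \<alpha> u w)"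

lemma beta_out_Bf: assumes v: "v \<in> V" shows "beta_out E (Bf r) v = Pf r v - r v"
proof -
  have "{Bf r v w | w. (v, w) \<in> E} = (\<lambda>w. (\<alpha> v w + r w) + (- r v)) ` {w. (v, w) \<in> E}"
    unfolding Bf_def by auto
  then show ?thesis unfolding beta_out_def Pf_def
    using Max_add_commute[OF fin_out has_out[OF v], of "\<lambda>w. \<alpha> v w + r w" "- r v"] by simp
qed

lemma beta_in_Bf: assumes v: "v \<in> V" shows "beta_in E (Bf r) v = Qf r v + r v"
proof -
  have "{Bf r u v | u. (u, v) \<in> E} = (\<lambda>u. (\<alpha> u v - r u) + r v) ` {u. (u, v) \<in> E}"
    unfolding Bf_def by auto
  then show ?thesis unfolding beta_in_def Qf_def
    using Max_add_commute[OF fin_in has_in[OF v], of "\<lambda>u. \<alpha> u v - r u" "r v"] by simp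
qed

lemma rho_Bf: "v \<in> V \<Longrightarrow> rhoR E (Bf r) v = max 0 (Pf r v - Qf r v - 2 * r v)"
  unfolding rhoR_def using beta_out_Bf beta_in_Bf by simp

lemma raise_Bf: "raise E (Bf r) v = Bf (\<lambda>x. r x + (if x = v then rhoR E (Bf r) v / 2 else 0))"
proof (cases "rhoR E (Bf r) v > 0")
  case True
  then show ?thesis unfolding raise_def Let_def by (auto simp: Bf_def fun_eq_iff)
next
  case False
  then have z: "rhoR E (Bf r) v = 0" unfolding rhoR_def by simp
  then have "(\<lambda>x. r x + (if x = v then rhoR E (Bf r) v / 2 else 0)) = r" by (simp add: fun_eq_iff)
  moreover have "raise E (Bf r) v = Bf r" unfolding raise_def Let_def using False by simp
  ultimately show ?thesis by simp
qed

lemma beta_seq_Bf: "beta_seq E \<alpha> \<sigma> t = Bf (raising_vec E \<alpha> \<sigma> t)"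
proof (induction t)
  case 0
  then show ?case by (simp add: Bf_def fun_eq_iff)
next
  case (Suc t)
  have "beta_seq E \<alpha> \<sigma> (Suc t) = raise E (Bf (raising_vec E \<alpha> \<sigma> t)) (\<sigma> t)" using Suc by simp
  also have "\<dots> = Bf (raising_vec E \<alpha> \<sigma> (Suc t))"
  proof -
    have "raising_vec E \<alpha> \<sigma> (Suc t) = (\<lambda>x. raising_vec E \<alpha> \<sigma> t x +
       (if x = \<sigma> t then rhoR E (Bf (raising_vec E \<alpha> \<sigma> t)) (\<sigma> t) / 2 else 0))"
      by (rule ext) (simp add: Suc.IH)
    then show ?thesis unfolding raise_Bf by simp
  qed
  finally show ?case .
qed

lemma R_Suc: "\<sigma> t \<in> V \<Longrightarrow> raising_vec E \<alpha> \<sigma> (Suc t) x = raising_vec E \<alpha> \<sigma> t x +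
   (if x = \<sigma> t then max 0 (Pf (raising_vec E \<alpha> \<sigma> t) x - Qf (raising_vec E \<alpha> \<sigma> t) x
      - 2 * raising_vec E \<alpha> \<sigma> t x) / 2 else 0)"
  by (simp add: beta_seq_Bf rho_Bf)

lemma Pf_mono: assumes "\<forall>x\<in>V. r x \<le> s x" "v \<in> V" shows "Pf r v \<le> Pf s v"
proof -
  have fin: "finite ((\<lambda>w. \<alpha> v w + s w) ` {w. (v, w) \<in> E})" using fin_out by simp
  have fin2: "finite ((\<lambda>w. \<alpha> v w + r w) ` {w. (v, w) \<in> E})" using fin_out by simp
  have ne: "(\<lambda>w. \<alpha> v w + r w) ` {w. (v, w) \<in> E} \<noteq> {}" using has_out[OF assms(2)] by simp
  show ?thesis unfolding Pf_def
  proof (subst Max_le_iff[OF fin2 ne], safe)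
    fix w assume w: "(v, w) \<in> E"
    then have "w \<in> V" using EV by auto
    then have "\<alpha> v w + r w \<le> \<alpha> v w + s w" using assms by simp
    also have "\<dots> \<le> Max ((\<lambda>w. \<alpha> v w + s w) ` {w. (v, w) \<in> E})" using fin w by (intro Max_ge) auto
    finally show "\<alpha> v w + r w \<le> Max ((\<lambda>w. \<alpha> v w + s w) ` {w. (v, w) \<in> E})" .
  qed
qed

lemma Qf_anti: assumes "\<forall>x\<in>V. r x \<le> s x" "v \<in> V" shows "Qf s v \<le> Qf r v"
proof -
  have fin: "finite ((\<lambda>u. \<alpha> u v - r u) ` {u. (u, v) \<in> E})" using fin_in by simp
  have fin2: "finite ((\<lambda>u. \<alpha> u v - s u) ` {u. (u, v) \<in> E})" using fin_in by simp
  have ne: "(\<lambda>u. \<alpha> u v - s u) ` {u. (u, v) \<in> E} \<noteq> {}" using has_in[OF assms(2)] by simp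
  show ?thesis unfolding Qf_def
  proof (subst Max_le_iff[OF fin2 ne], safe)
    fix u assume u: "(u, v) \<in> E"
    then have "u \<in> V" using EV by auto
    then have "\<alpha> u v - s u \<le> \<alpha> u v - r u" using assms by simp
    also have "\<dots> \<le> Max ((\<lambda>u. \<alpha> u v - r u) ` {u. (u, v) \<in> E})" using fin u by (intro Max_ge) auto
    finally show "\<alpha> u v - s u \<le> Max ((\<lambda>u. \<alpha> u v - r u) ` {u. (u, v) \<in> E})" .
  qed
qed

lemma Pf_shift: assumes "v \<in> V" shows "Pf (\<lambda>x. r x + k) v = Pf r v + k"
proof -
  have e: "(\<lambda>w. \<alpha> v w + (r w + k)) = (\<lambda>w. (\<alpha> v w + r w) + k)" by (simp add: algebra_simps)
  show ?thesis unfolding Pf_def e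
    by (rule Max_add_commute[OF fin_out has_out[OF assms]])
qed

lemma Qf_shift: assumes "v \<in> V" shows "Qf (\<lambda>x. r x + k) v = Qf r v - k"
proof -
  have e: "(\<lambda>u. \<alpha> u v - (r u + k)) = (\<lambda>u. (\<alpha> u v - r u) + (- k))" by (simp add: algebra_simps)
  show ?thesis unfolding Qf_def e
    using Max_add_commute[OF fin_in has_in[OF assms], of "\<lambda>u. \<alpha> u v - r u" "- k"] by simp
qed

lemma step_le: assumes "\<forall>x\<in>V. r x \<le> s x" "v \<in> V" "supersol s"
  shows "r v + max 0 (Pf r v - Qf r v - 2 * r v) / 2 \<le> s v"
proof -
  have "Pf r v - Qf r v \<le> Pf s v - Qf s v" using Pf_mono[OF assms(1,2)] Qf_anti[OF assms(1,2)] by simp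
  moreover have "Pf s v - Qf s v \<le> 2 * s v" using assms(2,3) unfolding supersol_def by blast
  moreover have "r v \<le> s v" using assms by blast
  ultimately show ?thesis by (auto simp: max_def field_simps)
qed


lemma R_bound: assumes "fair V \<sigma>" "supersol s" "\<forall>x\<in>V. 0 \<le> s x"
  shows "\<forall>x\<in>V. raising_vec E \<alpha> \<sigma> t x \<le> s x"
proof (induction t)
  case 0
  then show ?case using assms by simp
next
  case (Suc t)
  have st: "\<sigma> t \<in> V" using assms unfolding fair_def by blast
  show ?case
  proof
    fix x assume x: "x \<in> V"
    show "raising_vec E \<alpha> \<sigma> (Suc t) x \<le> s x"
    proof (cases "x = \<sigma> t")
      case True
      then show ?thesis using R_Suc[of \<sigma> t x, OF st] step_le[OF Suc x assms(2)] by simp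
    next
      case False
      then show ?thesis using R_Suc[of \<sigma> t x, OF st] Suc x by simp
    qed
  qed
qed

lemma R_inc: assumes "fair V \<sigma>" shows "raising_vec E \<alpha> \<sigma> t x \<le> raising_vec E \<alpha> \<sigma> (Suc t) x"
proof -
  have st: "\<sigma> t \<in> V" using assms unfolding fair_def by blast
  show ?thesis using R_Suc[of \<sigma> t x, OF st] by simp
qed

lemma R_incseq: "fair V \<sigma> \<Longrightarrow> incseq (\<lambda>t. raising_vec E \<alpha> \<sigma> t x)"
  using R_inc by (intro incseq_SucI) blast

definition L :: "(nat \<Rightarrow> 'v) \<Rightarrow> 'v \<Rightarrow> real" where
  "L \<sigma> x = (SUP t. raising_vec E \<alpha> \<sigma> t x)"

context
  assumes Vne: "V \<noteq> {}"
begin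

lemma Short_ne: "Short \<noteq> {}"
proof -
  obtain v where v: "v \<in> V" using Vne by blast
  obtain xs where "walk E xs" "2 \<le> length xs" "hd xs = v" "last xs = v"
    using trancl_walk[OF reach[OF v v]] by blast
  then have "closed xs" unfolding closed_def by simp
  then obtain ys where "ys \<in> Short" using short_bound by blast
  then show ?thesis by blast
qed

lemma closed_le: "closed xs \<Longrightarrow> wt \<alpha> xs \<le> lam * (real (length xs) - 1)"
proof -
  assume cl: "closed xs"
  then obtain ys where ys: "ys \<in> Short" "wt \<alpha> xs \<le> ratio ys * (real (length xs) - 1)"
    using short_bound by blast
  have "ratio ys \<le> lam" unfolding lam_def using ys(1) finite_Short by simp
  moreover have "real (length xs) - 1 \<ge> 0" using cl unfolding closed_def by simp
  ultimately have "ratio ys * (real (length xs) - 1) \<le> lam * (real (length xs) - 1)"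
    by (rule mult_right_mono)
  then show ?thesis using ys(2) by linarith
qed

lemma crit: "\<exists>cw. closed cw \<and> wt \<alpha> cw = lam * (real (length cw) - 1)"
proof -
  have "lam \<in> ratio ` Short" unfolding lam_def using finite_Short Short_ne by simp
  then obtain ys where ys: "ys \<in> Short" "ratio ys = lam" by (metis imageE)
  have "real (length ys) - 1 > 0" using ys unfolding Short_def closed_def by simp
  then have "wt \<alpha> ys = lam * (real (length ys) - 1)" using ys(2) unfolding ratio_def by (simp add: field_simps)
  then show ?thesis using ys unfolding Short_def by blast
qed


definition cw where "cw = (SOME cw. closed cw \<and> wt \<alpha> cw = lam * (real (length cw) - 1))"

lemma cw: "closed cw" "wt \<alpha> cw = lam * (real (length cw) - 1)"
  using someI_ex[OF crit] unfolding cw_def by blast+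

definition "x0 = hd cw"

definition cc :: "'v \<Rightarrow> 'v \<Rightarrow> real" where "cc u w = \<alpha> u w - lam"

lemma wt_cc: "xs \<noteq> [] \<Longrightarrow> wt cc xs = wt \<alpha> xs - lam * (real (length xs) - 1)"
  unfolding cc_def by (rule wt_shift)

lemma closed_cc: assumes "closed xs" shows "wt cc xs \<le> 0"
proof -
  have "xs \<noteq> []" using assms unfolding closed_def by auto
  then show ?thesis using closed_le[OF assms] wt_cc[of xs] by simp
qed

lemma x0V: "x0 \<in> V"
proof -
  have "set cw \<subseteq> V" using closed_set[OF cw(1)] .
  moreover have "cw \<noteq> []" using cw(1) unfolding closed_def by auto
  ultimately show ?thesis unfolding x0_def by auto
qed

definition S :: "'v \<Rightarrow> real set" where
  "S v = {wt cc p | p. walk E p \<and> 2 \<le> length p \<and> hd p = x0 \<and> last p = v}"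

definition d :: "'v \<Rightarrow> real" where "d v = Sup (S v)"

lemma S_ne: "v \<in> V \<Longrightarrow> S v \<noteq> {}"
  using trancl_walk[OF reach[OF x0V]] unfolding S_def by blast

lemma S_bdd: "v \<in> V \<Longrightarrow> bdd_above (S v)"
proof -
  assume v: "v \<in> V"
  obtain q where q: "walk E q" "2 \<le> length q" "hd q = v" "last q = x0"
    using trancl_walk[OF reach[OF v x0V]] by blast
  have "\<forall>y \<in> S v. y \<le> - wt cc q"
  proof
    fix y assume "y \<in> S v"
    then obtain p where p: "walk E p" "2 \<le> length p" "hd p = x0" "last p = v" "y = wt cc p"
      unfolding S_def by blast
    have pq: "walk E (p @ tl q) \<and> wt cc (p @ tl q) = wt cc p + wt cc q"
    proof -
      have "p \<noteq> []" "q \<noteq> []" using p(2) q(2) by auto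
      moreover have "last p = hd q" using p q by simp
      ultimately show ?thesis using walk_concat[of E p q cc] p(1) q(1) by blast
    qed
    have tq: "tl q \<noteq> []" using q(2) by (cases q) auto
    have pne: "p \<noteq> []" using p(2) by auto
    have "closed (p @ tl q)" unfolding closed_def using pq p q tq pne
      by (auto simp: last_tl hd_append)
    then have "wt cc (p @ tl q) \<le> 0" by (rule closed_cc)
    then show "y \<le> - wt cc q" using pq p by simp
  qed
  then show ?thesis unfolding bdd_above_def by blast
qed

lemma S_le_d: "v \<in> V \<Longrightarrow> y \<in> S v \<Longrightarrow> y \<le> d v"
  unfolding d_def using S_bdd by (simp add: cSup_upper)

lemma d_x0: "0 \<le> d x0"
proof -
  have "wt cc cw = 0" using wt_cc[OF closed_ne[OF cw(1)]] cw by simp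
  moreover have "wt cc cw \<in> S x0" unfolding S_def x0_def using cw(1) unfolding closed_def by auto
  ultimately show ?thesis using S_le_d[OF x0V] by fastforce
qed

lemma d_sub: assumes "(u, v) \<in> E" shows "d u + cc u v \<le> d v"
proof -
  have uv: "u \<in> V" "v \<in> V" using assms EV by auto
  have "\<forall>y\<in>S u. y \<le> d v - cc u v"
  proof
    fix y assume "y \<in> S u"
    then obtain p where p: "walk E p" "2 \<le> length p" "hd p = x0" "last p = u" "y = wt cc p"
      unfolding S_def by blast
    have pn: "p \<noteq> []" using p(2) by auto
    have "walk E (p @ [v])" using walk_snoc[OF pn] p assms by simp
    moreover have "wt cc (p @ [v]) = y + cc u v" using wt_snoc[OF pn] p by simp
    moreover have "hd (p @ [v]) = x0" using pn p by simp
    ultimately have "y + cc u v \<in> S v" unfolding S_def using p(2)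
      by (intro CollectI exI[of _ "p @ [v]"]) auto
    then show "y \<le> d v - cc u v" using S_le_d[OF uv(2)] by fastforce
  qed
  then have "d u \<le> d v - cc u v" unfolding d_def using S_ne[OF uv(1)] by (simp add: cSup_least)
  then show ?thesis by simp
qed

lemma d_tight: assumes v: "v \<in> V" shows "\<exists>u. (u, v) \<in> E \<and> d v \<le> d u + cc u v"
proof -
  define M where "M = Max ((\<lambda>u. d u + cc u v) ` {u. (u, v) \<in> E})"
  have fin: "finite ((\<lambda>u. d u + cc u v) ` {u. (u, v) \<in> E})" using fin_in by simp
  have ne: "(\<lambda>u. d u + cc u v) ` {u. (u, v) \<in> E} \<noteq> {}" using has_in[OF v] by simp
  have "\<forall>y\<in>S v. y \<le> M"
  proof
    fix y assume "y \<in> S v"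
    then obtain p where p: "walk E p" "2 \<le> length p" "hd p = x0" "last p = v" "y = wt cc p"
      unfolding S_def by blast
    define p0 where "p0 = butlast p"
    have pe: "p = p0 @ [v]" using p unfolding p0_def
      by (metis append_butlast_last_id list.size(3) not_numeral_le_zero)
    have p0n: "p0 \<noteq> []" using p(2) pe by (cases p0) auto
    define u where "u = last p0"
    have wp: "walk E p0 \<and> (u, v) \<in> E" using walk_snoc[OF p0n] p(1) pe unfolding u_def by simp
    have wy: "y = wt cc p0 + cc u v" using wt_snoc[OF p0n] p pe unfolding u_def by simp
    have uV: "u \<in> V" using wp EV by auto
    have "wt cc p0 \<le> d u"
    proof (cases "2 \<le> length p0")
      case True
      have "hd p0 = x0" using p(3) pe p0n by simp
      then have "wt cc p0 \<in> S u" unfolding S_def using True wp u_def by blast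
      then show ?thesis using S_le_d[OF uV] by blast
    next
      case False
      then obtain z where z: "p0 = [z]" using p0n by (cases p0; cases "tl p0") auto
      then have "z = x0" using p(3) pe by simp
      then show ?thesis using z d_x0 u_def by simp
    qed
    then have "y \<le> d u + cc u v" using wy by simp
    also have "\<dots> \<le> M" unfolding M_def using fin wp by (intro Max_ge) auto
    finally show "y \<le> M" .
  qed
  then have "d v \<le> M" unfolding d_def using S_ne[OF v] by (simp add: cSup_least)
  moreover have "M \<in> (\<lambda>u. d u + cc u v) ` {u. (u, v) \<in> E}" unfolding M_def using fin ne by (rule Max_in)
  ultimately show ?thesis by auto
qed


lemma exists_super: "\<exists>s. (\<forall>v\<in>V. 0 \<le> s v) \<and> supersol s"
proof -
  define C where "C = Max (d ` V)"
  define s where "s v = C - d v" for v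
  have s0: "\<forall>v\<in>V. 0 \<le> s v" unfolding s_def C_def using finV by simp
  have "supersol s" unfolding supersol_def
  proof
    fix v assume v: "v \<in> V"
    have finO: "finite ((\<lambda>w. \<alpha> v w + s w) ` {w. (v, w) \<in> E})" using fin_out by simp
    have neO: "(\<lambda>w. \<alpha> v w + s w) ` {w. (v, w) \<in> E} \<noteq> {}" using has_out[OF v] by simp
    have finI: "finite ((\<lambda>u. \<alpha> u v - s u) ` {u. (u, v) \<in> E})" using fin_in by simp
    have "Pf s v \<le> lam + s v" unfolding Pf_def
    proof (subst Max_le_iff[OF finO neO], safe)
      fix w assume "(v, w) \<in> E"
      then have "d v + cc v w \<le> d w" by (rule d_sub)
      then show "\<alpha> v w + s w \<le> lam + s v" unfolding s_def cc_def by simp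
    qed
    moreover have "lam - s v \<le> Qf s v"
    proof -
      obtain u where u: "(u, v) \<in> E" "d v \<le> d u + cc u v" using d_tight[OF v] by blast
      have "lam - s v \<le> \<alpha> u v - s u" using u(2) unfolding s_def cc_def by simp
      also have "\<dots> \<le> Qf s v" unfolding Qf_def using finI u(1) by (intro Max_ge) auto
      finally show ?thesis .
    qed
    ultimately show "Pf s v - Qf s v \<le> 2 * s v" by simp
  qed
  then show ?thesis using s0 by blast
qed

definition s0 where "s0 = (SOME s. (\<forall>v\<in>V. 0 \<le> s v) \<and> supersol s)"

lemma s0: "\<forall>v\<in>V. 0 \<le> s0 v" "supersol s0"
  using someI_ex[OF exists_super] unfolding s0_def by blast+

context
  fixes \<sigma> assumes fs: "fair V \<sigma>"
begin

lemma R_bdd: "x \<in> V \<Longrightarrow> bdd_above (range (\<lambda>t. raising_vec E \<alpha> \<sigma> t x))"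
  using R_bound[OF fs s0(2) s0(1)] unfolding bdd_above_def by blast

lemma R_lim: "x \<in> V \<Longrightarrow> (\<lambda>t. raising_vec E \<alpha> \<sigma> t x) \<longlonglongrightarrow> L \<sigma> x"
  unfolding L_def using R_bdd R_incseq[OF fs] by (rule LIMSEQ_incseq_SUP)

lemma L_upper: "x \<in> V \<Longrightarrow> raising_vec E \<alpha> \<sigma> t x \<le> L \<sigma> x"
  unfolding L_def using R_bdd by (intro cSUP_upper) auto

lemma L_least: "(\<And>t. raising_vec E \<alpha> \<sigma> t x \<le> b) \<Longrightarrow> L \<sigma> x \<le> b"
  unfolding L_def by (intro cSUP_least) auto

lemma L_nonneg: "x \<in> V \<Longrightarrow> 0 \<le> L \<sigma> x"
  using L_upper[of x 0] by simp

lemma L_min: "supersol s \<Longrightarrow> \<forall>v\<in>V. 0 \<le> s v \<Longrightarrow> x \<in> V \<Longrightarrow> L \<sigma> x \<le> s x"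
  using R_bound[OF fs] by (intro L_least) blast

lemma L_super: "supersol (L \<sigma>)"
  unfolding supersol_def
proof
  fix v assume v: "v \<in> V"
  show "Pf (L \<sigma>) v - Qf (L \<sigma>) v \<le> 2 * L \<sigma> v"
  proof (rule ccontr)
    assume na: "\<not> ?thesis"
    define \<delta> where "\<delta> = Pf (L \<sigma>) v - Qf (L \<sigma>) v - 2 * L \<sigma> v"
    have dpos: "\<delta> > 0" using na unfolding \<delta>_def by simp
    define \<epsilon> where "\<epsilon> = \<delta> / 4"
    have epos: "\<epsilon> > 0" using dpos unfolding \<epsilon>_def by simp
    have "\<forall>x\<in>V. eventually (\<lambda>t. L \<sigma> x - \<epsilon> < raising_vec E \<alpha> \<sigma> t x) sequentially"
    proof
      fix x assume x: "x \<in> V"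
      show "eventually (\<lambda>t. L \<sigma> x - \<epsilon> < raising_vec E \<alpha> \<sigma> t x) sequentially"
        using order_tendstoD(1)[OF R_lim[OF x], of "L \<sigma> x - \<epsilon>"] epos by simp
    qed
    then have "eventually (\<lambda>t. \<forall>x\<in>V. L \<sigma> x - \<epsilon> < raising_vec E \<alpha> \<sigma> t x) sequentially"
      using finV by (intro eventually_ball_finite) auto
    then obtain T where T: "\<And>t. t \<ge> T \<Longrightarrow> \<forall>x\<in>V. L \<sigma> x - \<epsilon> < raising_vec E \<alpha> \<sigma> t x"
      unfolding eventually_sequentially by blast
    have "infinite {t. \<sigma> t = v}" using fs v unfolding fair_def by blast
    then have "\<not> (\<forall>n\<in>{t. \<sigma> t = v}. n \<le> T)" using finite_nat_set_iff_bounded_le by blast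
    then obtain t where t0: "\<sigma> t = v" "\<not> t \<le> T" by blast
    then have t: "t \<ge> T" "\<sigma> t = v" by simp_all
    define r where "r = raising_vec E \<alpha> \<sigma> t"
    have rge: "\<forall>x\<in>V. L \<sigma> x + (- \<epsilon>) \<le> r x" using T[OF t(1)] unfolding r_def by fastforce
    have "Pf (\<lambda>x. L \<sigma> x + (- \<epsilon>)) v \<le> Pf r v" by (rule Pf_mono[OF rge v])
    moreover have "Pf (\<lambda>x. L \<sigma> x + (- \<epsilon>)) v = Pf (L \<sigma>) v + (- \<epsilon>)" by (rule Pf_shift[OF v])
    ultimately have P1: "Pf (L \<sigma>) v - \<epsilon> \<le> Pf r v" by linarith
    have "Qf r v \<le> Qf (\<lambda>x. L \<sigma> x + (- \<epsilon>)) v" by (rule Qf_anti[OF rge v])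
    moreover have "Qf (\<lambda>x. L \<sigma> x + (- \<epsilon>)) v = Qf (L \<sigma>) v - (- \<epsilon>)" by (rule Qf_shift[OF v])
    ultimately have Q1: "Qf r v \<le> Qf (L \<sigma>) v + \<epsilon>" by linarith
    have "raising_vec E \<alpha> \<sigma> (Suc t) v = r v + max 0 (Pf r v - Qf r v - 2 * r v) / 2"
      using R_Suc[of \<sigma> t v] t(2) v unfolding r_def by simp
    also have "\<dots> \<ge> (Pf r v - Qf r v) / 2" by (simp add: max_def)
    finally have F: "(Pf r v - Qf r v) / 2 \<le> raising_vec E \<alpha> \<sigma> (Suc t) v" .
    have A: "Pf (L \<sigma>) v - Qf (L \<sigma>) v - 2 * \<epsilon> \<le> Pf r v - Qf r v" using P1 Q1 by linarith
    have "(Pf (L \<sigma>) v - Qf (L \<sigma>) v - 2 * \<epsilon>) / 2 \<le> (Pf r v - Qf r v) / 2"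
      using A by (rule divide_right_mono) simp
    then have "raising_vec E \<alpha> \<sigma> (Suc t) v \<ge> (Pf (L \<sigma>) v - Qf (L \<sigma>) v - 2 * \<epsilon>) / 2"
      using F by linarith
    then have "raising_vec E \<alpha> \<sigma> (Suc t) v > L \<sigma> v"
      using aux_ineq \<epsilon>_def \<delta>_def dpos by blast
    then show False using L_upper[OF v, of "Suc t"] by simp
  qed
qed

end

lemma L_unique: assumes "fair V \<sigma>1" "fair V \<sigma>2" "x \<in> V" shows "L \<sigma>1 x = L \<sigma>2 x"
proof -
  have n1: "\<forall>v\<in>V. 0 \<le> L \<sigma>1 v" using L_nonneg[OF assms(1)] by blast
  have n2: "\<forall>v\<in>V. 0 \<le> L \<sigma>2 v" using L_nonneg[OF assms(2)] by blast
  have "L \<sigma>1 x \<le> L \<sigma>2 x" using L_min[OF assms(1) L_super[OF assms(2)] n2 assms(3)] .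
  moreover have "L \<sigma>2 x \<le> L \<sigma>1 x" using L_min[OF assms(2) L_super[OF assms(1)] n1 assms(3)] .
  ultimately show ?thesis by simp
qed

end
end

theorem lemma3:
  fixes V :: "'v set" and E :: "('v \<times> 'v) set" and \<alpha> :: "'v \<Rightarrow> 'v \<Rightarrow> real"
  assumes "finite V" and "strongly_connected V E"
  shows "\<exists>rstar :: 'v \<Rightarrow> real. \<forall>\<sigma>. fair V \<sigma> \<longrightarrow>
           (\<forall>v\<in>V. (\<lambda>t. raising_vec E \<alpha> \<sigma> t v) \<longlonglongrightarrow> rstar v)"
proof (cases "\<exists>\<sigma>. fair V \<sigma>")
  case False
  then show ?thesis by blast
next
  case True
  then obtain \<sigma>0 where f0: "fair V \<sigma>0" by blast
  interpret scg V E \<alpha> using assms by unfold_locales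
  have Vne: "V \<noteq> {}" using f0 unfolding fair_def by blast
  show ?thesis
  proof (intro exI[of _ "L \<sigma>0"] allI impI ballI)
    fix \<sigma> v assume f: "fair V \<sigma>" and v: "v \<in> V"
    have "L \<sigma> v = L \<sigma>0 v" by (rule L_unique[OF Vne f f0 v])
    then show "(\<lambda>t. raising_vec E \<alpha> \<sigma> t v) \<longlonglongrightarrow> L \<sigma>0 v" using R_lim[OF Vne f v] by simp
  qed
qed

end
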